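(* Let $\Gamma\subseteq\mathbb R^n$ be an open convex set, $S\subseteq\Gamma$ a nonempty convex set, and $f:\Gamma\to\mathbb R$ a Fréchet differentiable function that is quasiconvex on $\Gamma$. Let $\bar S=\arg\min\{f(x)\mid x\in S\}$, and let $x,y\in\bar S$ with $\nabla f(x)\neq 0$ and $\nabla f(y)\neq 0$. Then for every $d\in\mathbb R^n$, \[ \nabla f(x)^T d<0\quad\Longrightarrow\quad \nabla f(y)^T d\le 0 . \]
   Context: A function $f:\Gamma\to\mathbb R$ on a convex set $\Gamma\subseteq\mathbb R^n$ is quasiconvex on $\Gamma$ iff $f(x+t(y-x))\le\max\{f(x),f(y)\}$ for all $x,y\in\Gamma$ and $t\in[0,1]$. $\bar S$ denotes the solution set of the problem of minimizing $f$ over $S$. *)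

theory Defs
  imports "HOL-Analysis.Analysis"
begin

definition quasiconvex_on :: "('a::real_vector) set \<Rightarrow> ('a \<Rightarrow> real) \<Rightarrow> bool" where
  "quasiconvex_on \<Gamma> f \<longleftrightarrow>
     (\<forall>x\<in>\<Gamma>. \<forall>y\<in>\<Gamma>. \<forall>t::real. 0 \<le> t \<and> t \<le> 1 \<longrightarrow>
        f (x + t *\<^sub>R (y - x)) \<le> max (f x) (f y))"

definition argmin_set :: "('a \<Rightarrow> real) \<Rightarrow> 'a set \<Rightarrow> 'a set" where
  "argmin_set f S = {x \<in> S. \<forall>z\<in>S. f x \<le> f z}"

definition grad :: "(real^'n \<Rightarrow> real) \<Rightarrow> real^'n \<Rightarrow> real^'n" where
  "grad f x = (\<chi> i. frechet_derivative f (at x) (axis i 1))"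

end

theory Submission
  imports Defs
begin

lemma grad_inner:
  fixes f :: "real^'n \<Rightarrow> real"
  assumes "f differentiable (at z)"
  shows "frechet_derivative f (at z) w = grad f z \<bullet> w"
proof -
  let ?D = "frechet_derivative f (at z)"
  have hd: "(f has_derivative ?D) (at z)" using assms frechet_derivative_works by blast
  have lin: "linear ?D" using has_derivative_linear[OF hd] .
  have "?D w = ?D (\<Sum>i\<in>UNIV. (w$i) *s axis i 1)" by (simp add: basis_expansion)
  also have "\<dots> = (\<Sum>i\<in>UNIV. w$i * ?D (axis i 1))"
    by (simp add: scalar_mult_eq_scaleR linear_sum[OF lin] linear_scale[OF lin])
  also have "\<dots> = grad f z \<bullet> w" by (simp add: grad_def inner_vec_def mult.commute)
  finally show ?thesis .
qed

lemma line_deriv: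
  fixes f :: "real^'n \<Rightarrow> real"
  assumes "f differentiable (at z)"
  shows "((\<lambda>s. f (z + s *\<^sub>R w)) has_real_derivative (grad f z \<bullet> w)) (at 0)"
proof -
  let ?D = "frechet_derivative f (at z)"
  have hd: "(f has_derivative ?D) (at z)" using assms frechet_derivative_works by blast
  have lin: "linear ?D" using has_derivative_linear[OF hd] .
  have hl: "((\<lambda>s. z + s *\<^sub>R w) has_derivative (\<lambda>s. s *\<^sub>R w)) (at 0)"
    by (auto intro!: derivative_eq_intros)
  have hd0: "(f has_derivative ?D) (at ((\<lambda>s. z + s *\<^sub>R w) 0))" using hd by simp
  have "((\<lambda>s. f (z + s *\<^sub>R w)) has_derivative (\<lambda>s. ?D (s *\<^sub>R w))) (at 0)"
    using has_derivative_compose[OF hl hd0] by (simp add: o_def)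
  moreover have "(\<lambda>s. ?D (s *\<^sub>R w)) = (\<lambda>s. s * (grad f z \<bullet> w))"
    using linear_scale[OF lin] grad_inner[OF assms] by auto
  ultimately have "((\<lambda>s. f (z + s *\<^sub>R w)) has_derivative (\<lambda>s. s * (grad f z \<bullet> w))) (at 0)" by simp
  moreover have "(\<lambda>s. s * (grad f z \<bullet> w)) = (*) (grad f z \<bullet> w)" by (auto simp: mult.commute)
  ultimately show ?thesis by (simp add: has_field_derivative_def)
qed

theorem lemma3:
  fixes f :: "real^'n \<Rightarrow> real"
    and \<Gamma> S :: "(real^'n) set"
    and x y d :: "real^'n"
  assumes "open \<Gamma>" and "convex \<Gamma>"
    and "S \<subseteq> \<Gamma>" and "S \<noteq> {}" and "convex S"
    and "\<forall>z\<in>\<Gamma>. f differentiable (at z)"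
    and "quasiconvex_on \<Gamma> f"
    and "x \<in> argmin_set f S" and "y \<in> argmin_set f S"
    and "grad f x \<noteq> 0" and "grad f y \<noteq> 0"
  shows "grad f x \<bullet> d < 0 \<longrightarrow> grad f y \<bullet> d \<le> 0"
proof (intro impI, rule ccontr)
  assume gx: "grad f x \<bullet> d < 0" and "\<not> grad f y \<bullet> d \<le> 0"
  hence gy: "grad f y \<bullet> d > 0" by simp
  have xS: "x \<in> S" and yS: "y \<in> S" and minx: "\<forall>z\<in>S. f x \<le> f z" and miny: "\<forall>z\<in>S. f y \<le> f z"
    using assms(8,9) by (auto simp: argmin_set_def)
  have xG: "x \<in> \<Gamma>" and yG: "y \<in> \<Gamma>" using xS yS assms(3) by auto
  have fxy: "f x = f y" using minx miny xS yS by (meson order_antisym)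
  obtain e1 where e1: "e1 > 0" "\<forall>h>0. h < e1 \<longrightarrow> f (x + (0 + h) *\<^sub>R d) < f (x + 0 *\<^sub>R d)"
    using DERIV_neg_dec_right[OF line_deriv[of f x d] gx] assms(6) xG by auto
  obtain e2 where e2: "e2 > 0" "ball x e2 \<subseteq> \<Gamma>"
    using assms(1) xG open_contains_ball by blast
  define h where "h = min (e1/2) (e2 / (2 * (norm d + 1)))"
  have hpos: "h > 0" using e1 e2 by (simp add: h_def) (smt (verit) norm_ge_zero divide_pos_pos)
  have "h < e1" using e1 by (simp add: h_def)
  hence fp: "f (x + h *\<^sub>R d) < f x" using e1 hpos by simp
  have "norm (h *\<^sub>R d) < e2"
  proof -
    have "norm (h *\<^sub>R d) = h * norm d" using hpos by simp
    also have "\<dots> \<le> (e2 / (2 * (norm d + 1))) * norm d"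
      by (rule mult_right_mono) (auto simp: h_def)
    also have "\<dots> < e2"
    proof -
      have "(e2 / (2 * (norm d + 1))) * norm d = e2 * (norm d / (2 * (norm d + 1)))" by simp
      also have "norm d / (2 * (norm d + 1)) < 1" by (simp add: divide_less_eq) (smt (verit) norm_ge_zero)
      hence "e2 * (norm d / (2 * (norm d + 1))) < e2 * 1" using e2(1) by (intro mult_strict_left_mono) auto
      finally show ?thesis by simp
    qed
    finally show ?thesis .
  qed
  hence pG: "x + h *\<^sub>R d \<in> \<Gamma>" using e2(2) by (auto simp: dist_norm)
  define p where "p = x + h *\<^sub>R d"
  have gyx: "grad f y \<bullet> (x - y) \<ge> 0"
  proof (rule ccontr)
    assume "\<not> ?thesis"
    hence "grad f y \<bullet> (x - y) < 0" by simp
    then obtain e where e: "e > 0" "\<forall>h>0. h < e \<longrightarrow> f (y + (0 + h) *\<^sub>R (x - y)) < f (y + 0 *\<^sub>R (x - y))"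
      using DERIV_neg_dec_right[OF line_deriv[of f y "x - y"]] assms(6) yG by blast
    define s where "s = min (e/2) 1"
    have s: "s > 0" "s < e" "s \<le> 1" using e by (auto simp: s_def)
    have "f (y + s *\<^sub>R (x - y)) < f y" using e s by simp
    moreover have "y + s *\<^sub>R (x - y) \<in> S"
    proof -
      have "y + s *\<^sub>R (x - y) = (1 - s) *\<^sub>R y + s *\<^sub>R x" by (simp add: algebra_simps)
      thus ?thesis using assms(5) xS yS s by (simp add: convex_def)
    qed
    ultimately show False using miny by fastforce
  qed
  have "grad f y \<bullet> (p - y) = grad f y \<bullet> (x - y) + h * (grad f y \<bullet> d)"
    by (simp add: p_def inner_diff_right inner_add_right)
  hence "grad f y \<bullet> (p - y) > 0" using gyx hpos gy by (smt (verit) mult_pos_pos)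
  then obtain e where e: "e > 0" "\<forall>h>0. h < e \<longrightarrow> f (y + 0 *\<^sub>R (p - y)) < f (y + (0 + h) *\<^sub>R (p - y))"
    using DERIV_pos_inc_right[OF line_deriv[of f y "p - y"]] assms(6) yG by blast
  define s where "s = min (e/2) 1"
  have s: "s > 0" "s < e" "s \<le> 1" using e by (auto simp: s_def)
  have "f y < f (y + s *\<^sub>R (p - y))" using e s by simp
  moreover have "f (y + s *\<^sub>R (p - y)) \<le> max (f y) (f p)"
    using assms(7) yG pG s unfolding quasiconvex_on_def p_def by auto
  ultimately show False using fp fxy p_def by auto
qed

end
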